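(* Let a compilation chain be given, and let ${\sim}\subseteq \mathit{Trace}_S\times\mathit{Trace}_T$ and a Galois connection $\tau : (2^{\mathit{Trace}_S},\subseteq) \rightleftarrows (2^{\mathit{Trace}_T},\subseteq) : \sigma$ ($\tau$ lower adjoint) correspond to each other, in the sense that $s \sim t \iff t \in \tau(\{s\})$ for all $s,t$ (equivalently, $\tau$ and $\sigma$ are the existential and universal images of $\sim$). Then $\mathit{TP}^{\tau} \iff \mathit{CC}^{\sim} \iff \mathit{TP}^{\sigma}$, where $\mathit{TP}^{\tau} \equiv \forall \pi_S.\ \forall W.\ W \models \pi_S \Rightarrow W{\downarrow}\models \tau(\pi_S)$ and $\mathit{TP}^{\sigma}\equiv \forall \pi_T.\ \forall W.\ W\models\sigma(\pi_T) \Rightarrow W{\downarrow}\models \pi_T$.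
   Context: A compilation chain consists of a set of source (whole) programs $W$, a set of target programs, a set $\mathit{Trace}_S$ of source traces and a set $\mathit{Trace}_T$ of target traces, a source semantics relation $W \rightsquigarrow s$ (program $W$ can produce trace $s$), a target semantics relation of the same kind, and a compiler mapping each source program $W$ to a target program $W{\downarrow}$. A trace property is a set of traces; $W \models \pi$ iff every trace $W$ produces belongs to $\pi$. The existential image of $\sim$ is $\tilde\tau(\pi) = \{t \mid \exists s.\ s\sim t \wedge s\in\pi\}$ and its universal image is $\tilde\sigma(\pi)=\{s\mid \forall t.\ s\sim t\Rightarrow t\in\pi\}$. A Galois connection with lower adjoint $\tau$ means $\tau(\pi_S)\subseteq\pi_T \iff \pi_S\subseteq\sigma(\pi_T)$ for all $\pi_S,\pi_T$. The criterion $\mathit{CC}^{\sim}$ states: for every source program $W$ and every $t\in\mathit{Trace}_T$, if $W{\downarrow}\rightsquigarrow t$ then there exists $s$ with $s\sim t$ and $W\rightsquigarrow s$. *)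

theory Defs
  imports Main
begin

text \<open>A compilation chain is modelled by: source semantics semS (W produces s),
 target semantics semT, and a compiler cmp (W maps to its compiled version).\<close>

definition sat :: "('p \<Rightarrow> 'tr \<Rightarrow> bool) \<Rightarrow> 'p \<Rightarrow> 'tr set \<Rightarrow> bool" where
  "sat sem W \<pi> \<longleftrightarrow> (\<forall>t. sem W t \<longrightarrow> t \<in> \<pi>)"

definition galois_connection :: "('a set \<Rightarrow> 'b set) \<Rightarrow> ('b set \<Rightarrow> 'a set) \<Rightarrow> bool" where
  "galois_connection \<tau> \<sigma> \<longleftrightarrow> (\<forall>\<pi>S \<pi>T. \<tau> \<pi>S \<subseteq> \<pi>T \<longleftrightarrow> \<pi>S \<subseteq> \<sigma> \<pi>T)"

definition TP_tau :: "('w \<Rightarrow> 's \<Rightarrow> bool) \<Rightarrow> ('wt \<Rightarrow> 't \<Rightarrow> bool) \<Rightarrow> ('w \<Rightarrow> 'wt)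
    \<Rightarrow> ('s set \<Rightarrow> 't set) \<Rightarrow> bool" where
  "TP_tau semS semT cmp \<tau> \<longleftrightarrow>
     (\<forall>\<pi>S W. sat semS W \<pi>S \<longrightarrow> sat semT (cmp W) (\<tau> \<pi>S))"

definition TP_sigma :: "('w \<Rightarrow> 's \<Rightarrow> bool) \<Rightarrow> ('wt \<Rightarrow> 't \<Rightarrow> bool) \<Rightarrow> ('w \<Rightarrow> 'wt)
    \<Rightarrow> ('t set \<Rightarrow> 's set) \<Rightarrow> bool" where
  "TP_sigma semS semT cmp \<sigma> \<longleftrightarrow>
     (\<forall>\<pi>T W. sat semS W (\<sigma> \<pi>T) \<longrightarrow> sat semT (cmp W) \<pi>T)"

definition CC :: "('w \<Rightarrow> 's \<Rightarrow> bool) \<Rightarrow> ('wt \<Rightarrow> 't \<Rightarrow> bool) \<Rightarrow> ('w \<Rightarrow> 'wt)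
    \<Rightarrow> ('s \<Rightarrow> 't \<Rightarrow> bool) \<Rightarrow> bool" where
  "CC semS semT cmp rel \<longleftrightarrow>
     (\<forall>W t. semT (cmp W) t \<longrightarrow> (\<exists>s. rel s t \<and> semS W s))"

end

theory Submission
  imports Defs
begin

lemma gc_tau:
  assumes "galois_connection \<tau> \<sigma>"
  shows "\<tau> P = (\<Union>s\<in>P. \<tau> {s})"
proof
  have "P \<subseteq> \<sigma> (\<Union>s\<in>P. \<tau> {s})"
  proof
    fix s assume "s \<in> P"
    hence "\<tau> {s} \<subseteq> (\<Union>s\<in>P. \<tau> {s})" by blast
    thus "s \<in> \<sigma> (\<Union>s\<in>P. \<tau> {s})" using assms unfolding galois_connection_def by blast
  qed
  thus "\<tau> P \<subseteq> (\<Union>s\<in>P. \<tau> {s})" using assms unfolding galois_connection_def by blast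
next
  have "P \<subseteq> \<sigma> (\<tau> P)" using assms unfolding galois_connection_def by blast
  hence "\<And>s. s \<in> P \<Longrightarrow> \<tau> {s} \<subseteq> \<tau> P" using assms unfolding galois_connection_def by blast
  thus "(\<Union>s\<in>P. \<tau> {s}) \<subseteq> \<tau> P" by blast
qed

lemma gc_sigma:
  assumes "galois_connection \<tau> \<sigma>"
  shows "s \<in> \<sigma> X \<longleftrightarrow> \<tau> {s} \<subseteq> X"
  using assms unfolding galois_connection_def by blast

theorem theorem2p8:
  fixes semS :: "'w \<Rightarrow> 's \<Rightarrow> bool" and semT :: "'wt \<Rightarrow> 't \<Rightarrow> bool"
    and cmp :: "'w \<Rightarrow> 'wt" and rel :: "'s \<Rightarrow> 't \<Rightarrow> bool"
    and \<tau> :: "'s set \<Rightarrow> 't set" and \<sigma> :: "'t set \<Rightarrow> 's set"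
  assumes "galois_connection \<tau> \<sigma>"
    and "\<forall>s t. rel s t \<longleftrightarrow> t \<in> \<tau> {s}"
  shows "(TP_tau semS semT cmp \<tau> \<longleftrightarrow> CC semS semT cmp rel)
       \<and> (CC semS semT cmp rel \<longleftrightarrow> TP_sigma semS semT cmp \<sigma>)"
proof -
  have R: "\<And>s. \<tau> {s} = {t. rel s t}" using assms(2) by blast
  have T: "\<And>P. \<tau> P = {t. \<exists>s\<in>P. rel s t}" 
  proof -
    fix P show "\<tau> P = {t. \<exists>s\<in>P. rel s t}" using gc_tau[OF assms(1), of P] R by auto
  qed
  have S: "\<And>X. \<sigma> X = {s. \<forall>t. rel s t \<longrightarrow> t \<in> X}"
  proof -
    fix X show "\<sigma> X = {s. \<forall>t. rel s t \<longrightarrow> t \<in> X}"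
      using gc_sigma[OF assms(1), of _ X] unfolding R by blast
  qed
  have 1: "TP_tau semS semT cmp \<tau> \<longleftrightarrow> CC semS semT cmp rel"
  proof
    assume h: "TP_tau semS semT cmp \<tau>"
    show "CC semS semT cmp rel" unfolding CC_def
    proof (intro allI impI)
      fix W t assume "semT (cmp W) t"
      moreover have "sat semS W {s. semS W s}" by (simp add: sat_def)
      ultimately show "\<exists>s. rel s t \<and> semS W s" using h unfolding TP_tau_def sat_def T by blast
    qed
  next
    assume "CC semS semT cmp rel" thus "TP_tau semS semT cmp \<tau>"
      unfolding CC_def TP_tau_def sat_def T by blast
  qed
  have 2: "CC semS semT cmp rel \<longleftrightarrow> TP_sigma semS semT cmp \<sigma>"
  proof
    assume "CC semS semT cmp rel" thus "TP_sigma semS semT cmp \<sigma>"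
      unfolding CC_def TP_sigma_def sat_def S by blast
  next
    assume h: "TP_sigma semS semT cmp \<sigma>"
    show "CC semS semT cmp rel" unfolding CC_def
    proof (intro allI impI)
      fix W t assume "semT (cmp W) t"
      moreover have "sat semS W (\<sigma> {t. \<exists>s. rel s t \<and> semS W s})" by (auto simp add: sat_def S)
      ultimately show "\<exists>s. rel s t \<and> semS W s" using h unfolding TP_sigma_def sat_def by blast
    qed
  qed
  show ?thesis using 1 2 by blast
qed

end
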